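(* Let $k\ge1$, $a_0,a_1,\dots,a_m\in\mathbb{R}^{2k}$, and let $p(x)=a_m\circledast x^m+a_{m-1}\circledast x^{m-1}+\dots+a_1\circledast x+a_0$ for $x\in\mathbb{R}^{2k}$, where $x^j$ denotes the $j$-fold $\circledast$-product of $x$ with itself. Writing $p=[p_1,\dots,p_{2k}]$, each component $p_j$ is a harmonic polynomial on $\mathbb{R}^{2k}$, i.e. a real polynomial in $x_1,\dots,x_{2k}$ with $\sum_{i=1}^{2k}\partial^2p_j/\partial x_i^2=0$.
   Context: Let $n=2k$ and let $\mathfrak g$ be the real $n\times n$ matrix with $\mathfrak g_{i,i+1}=1$ ($1\le i\le n-1$), $\mathfrak g_{n,1}=-1$, other entries $0$. For $u\in\mathbb{R}^n$ set $\varsigma(u)=\sum_{\ell=1}^n u_\ell\mathfrak g^{\ell-1}$ and $u\circledast v=\varsigma^{-1}(\varsigma(u)\varsigma(v))$; this is a commutative associative algebra with identity $e_1$. *)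

theory Defs
  imports "HOL-Analysis.Analysis"
begin

text \<open>Vectors in R^n are modelled as functions nat => real, component i (0-based)
  standing for the paper's component i+1; only components below n are meaningful.
  n x n matrices are modelled as nat => nat => real (0-based indices below n).\<close>

definition vspace :: "nat \<Rightarrow> (nat \<Rightarrow> real) set" where
  "vspace n = {u. \<forall>j\<ge>n. u j = 0}"

definition mat_mult :: "nat \<Rightarrow> (nat \<Rightarrow> nat \<Rightarrow> real) \<Rightarrow> (nat \<Rightarrow> nat \<Rightarrow> real) \<Rightarrow> nat \<Rightarrow> nat \<Rightarrow> real" where
  "mat_mult n A B = (\<lambda>i j. \<Sum>l<n. A i l * B l j)"

definition mat_id :: "nat \<Rightarrow> nat \<Rightarrow> nat \<Rightarrow> real" where
  "mat_id n = (\<lambda>i j. if i = j \<and> i < n then 1 else 0)"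

fun mat_pow :: "nat \<Rightarrow> (nat \<Rightarrow> nat \<Rightarrow> real) \<Rightarrow> nat \<Rightarrow> nat \<Rightarrow> nat \<Rightarrow> real" where
  "mat_pow n A 0 = mat_id n"
| "mat_pow n A (Suc m) = mat_mult n A (mat_pow n A m)"

definition gmat :: "nat \<Rightarrow> nat \<Rightarrow> nat \<Rightarrow> real" where
  "gmat n = (\<lambda>i j. if i + 1 < n \<and> j = i + 1 then 1
                   else if 0 < n \<and> i = n - 1 \<and> j = 0 then -1 else 0)"

definition vsig :: "nat \<Rightarrow> (nat \<Rightarrow> real) \<Rightarrow> nat \<Rightarrow> nat \<Rightarrow> real" where
  "vsig n u = (\<lambda>i j. \<Sum>l<n. u l * mat_pow n (gmat n) l i j)"

definition cmult :: "nat \<Rightarrow> (nat \<Rightarrow> real) \<Rightarrow> (nat \<Rightarrow> real) \<Rightarrow> nat \<Rightarrow> real" where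
  "cmult n u v = (THE w. w \<in> vspace n \<and> vsig n w = mat_mult n (vsig n u) (vsig n v))"

definition e1 :: "nat \<Rightarrow> real" where
  "e1 = (\<lambda>j. if j = 0 then 1 else 0)"

fun cpow :: "nat \<Rightarrow> (nat \<Rightarrow> real) \<Rightarrow> nat \<Rightarrow> nat \<Rightarrow> real" where
  "cpow n x 0 = e1"
| "cpow n x (Suc m) = cmult n x (cpow n x m)"

definition cpoly :: "nat \<Rightarrow> (nat \<Rightarrow> nat \<Rightarrow> real) \<Rightarrow> nat \<Rightarrow> (nat \<Rightarrow> real) \<Rightarrow> nat \<Rightarrow> real" where
  "cpoly n a m x = (\<lambda>j. \<Sum>i\<le>m. cmult n (a i) (cpow n x i) j)"

definition real_poly_fun :: "nat \<Rightarrow> ((nat \<Rightarrow> real) \<Rightarrow> real) \<Rightarrow> bool" where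
  "real_poly_fun n f \<longleftrightarrow> (\<exists>S c. finite S \<and> (\<forall>\<alpha>\<in>S. \<forall>i\<ge>n. \<alpha> i = 0) \<and>
      (\<forall>x. f x = (\<Sum>\<alpha>\<in>S. c \<alpha> * (\<Prod>i<n. x i ^ \<alpha> i))))"

definition partial_d :: "nat \<Rightarrow> ((nat \<Rightarrow> real) \<Rightarrow> real) \<Rightarrow> (nat \<Rightarrow> real) \<Rightarrow> real" where
  "partial_d i f = (\<lambda>x. deriv (\<lambda>t. f (x(i := t))) (x i))"

definition laplacian :: "nat \<Rightarrow> ((nat \<Rightarrow> real) \<Rightarrow> real) \<Rightarrow> (nat \<Rightarrow> real) \<Rightarrow> real" where
  "laplacian n f = (\<lambda>x. \<Sum>i<n. partial_d i (partial_d i f) x)"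

definition harmonic_poly :: "nat \<Rightarrow> ((nat \<Rightarrow> real) \<Rightarrow> real) \<Rightarrow> bool" where
  "harmonic_poly n f \<longleftrightarrow> real_poly_fun n f \<and> (\<forall>x. laplacian n f x = 0)"

end

theory Submission
  imports Defs
begin


lemma gmat_row:
  assumes n: "0 < n"
  shows "(\<Sum>l<n. gmat n i l * X l) = (if i + 1 < n then X (i+1) else if i = n - 1 then - X 0 else 0)"
proof (cases "i + 1 < n")
  case True
  hence "\<And>l. gmat n i l * X l = (if l = i + 1 then X l else 0)" by (auto simp: gmat_def)
  thus ?thesis using True by (simp add: sum.delta)
next
  case False
  show ?thesis
  proof (cases "i = n - 1")
    case True
    hence "\<And>l. gmat n i l * X l = (if l = 0 then - X l else 0)" using n False by (auto simp: gmat_def)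
    thus ?thesis using True False n by (simp add: sum.delta)
  next
    case F2: False
    hence "\<And>l. gmat n i l = 0" using n False by (auto simp: gmat_def)
    thus ?thesis using F2 False by simp
  qed
qed

lemma gpow:
  assumes n: "0 < n"
  shows "mat_pow n (gmat n) l i j = (if i < n \<and> j < n \<and> (i + l) mod n = j then (-1) ^ ((i + l) div n) else 0)"
proof (induction l arbitrary: i j)
  case 0
  then show ?case by (auto simp: mat_id_def)
next
  case (Suc l)
  have "mat_pow n (gmat n) (Suc l) i j = (\<Sum>m<n. gmat n i m * mat_pow n (gmat n) l m j)"
    by (simp add: mat_mult_def)
  also have "\<dots> = (if i + 1 < n then mat_pow n (gmat n) l (i+1) j else if i = n - 1 then - mat_pow n (gmat n) l 0 j else 0)"
    by (rule gmat_row[OF n])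
  also have "\<dots> = (if i < n \<and> j < n \<and> (i + Suc l) mod n = j then (-1) ^ ((i + Suc l) div n) else 0)"
  proof -
    { assume "i + 1 < n" hence ?thesis using Suc by simp }
    moreover
    { assume h: "\<not> i + 1 < n" "i = n - 1"
      hence e: "i + Suc l = n + l" using n by simp
      have ?thesis using h Suc n unfolding e by auto }
    moreover
    { assume h: "\<not> i + 1 < n" "i \<noteq> n - 1"
      hence "\<not> i < n" by simp
      hence ?thesis using h by simp }
    ultimately show ?thesis by blast
  qed
  finally show ?case .
qed

lemma mat_mult_assoc: "mat_mult n (mat_mult n A B) C = mat_mult n A (mat_mult n B C)"
  unfolding mat_mult_def
  by (rule ext, rule ext, simp add: sum_distrib_left sum_distrib_right mult.assoc, rule sum.swap)

lemma pow_add: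
  assumes n: "0 < n"
  shows "mat_pow n (gmat n) (a + b) = mat_mult n (mat_pow n (gmat n) a) (mat_pow n (gmat n) b)"
proof (induction a)
  case 0
  show ?case
  proof (rule ext, rule ext)
    fix i j
    have "mat_mult n (mat_pow n (gmat n) 0) (mat_pow n (gmat n) b) i j
        = (\<Sum>l<n. (if l = i then (if i < n then mat_pow n (gmat n) b l j else 0) else 0))"
      unfolding mat_mult_def by (rule sum.cong) (simp_all add: mat_id_def)
    also have "\<dots> = mat_pow n (gmat n) b i j" by (simp add: sum.delta gpow[OF n])
    finally show "mat_pow n (gmat n) (0 + b) i j = mat_mult n (mat_pow n (gmat n) 0) (mat_pow n (gmat n) b) i j" by simp
  qed
next
  case (Suc a)
  then show ?case by (simp add: mat_mult_assoc)
qed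

lemma pow_mod:
  assumes n: "0 < n"
  shows "mat_pow n (gmat n) s i j = (-1) ^ (s div n) * mat_pow n (gmat n) (s mod n) i j"
proof -
  have e1: "(i + s) mod n = (i + s mod n) mod n" by (simp add: mod_add_right_eq)
  have "i + s = (i + s mod n) + (s div n) * n" by simp
  hence e2: "(i + s) div n = s div n + (i + s mod n) div n" using n
    by (metis add.commute div_mult_self1 less_not_refl2)
  show ?thesis unfolding gpow[OF n] e1 e2 by (simp add: power_add)
qed

definition cvec :: "nat \<Rightarrow> nat \<Rightarrow> nat \<Rightarrow> real" where
  "cvec n s = (\<lambda>l. if l = s mod n then (-1) ^ (s div n) else 0)"

lemma vsig_cvec:
  assumes n: "0 < n"
  shows "vsig n (cvec n s) = mat_pow n (gmat n) s"
proof (rule ext, rule ext)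
  fix i j
  have "vsig n (cvec n s) i j = (\<Sum>l<n. if l = s mod n then (-1) ^ (s div n) * mat_pow n (gmat n) l i j else 0)"
    unfolding vsig_def cvec_def by (rule sum.cong) auto
  also have "\<dots> = mat_pow n (gmat n) s i j" using n by (simp add: sum.delta pow_mod[OF n, of s])
  finally show "vsig n (cvec n s) i j = mat_pow n (gmat n) s i j" .
qed

lemma vsig_row0:
  assumes n: "0 < n"
  shows "vsig n u 0 j = (if j < n then u j else 0)"
proof -
  have "vsig n u 0 j = (\<Sum>l<n. if l = j then (if j < n then u j else 0) else 0)"
    unfolding vsig_def by (rule sum.cong) (auto simp: gpow[OF n])
  thus ?thesis by (simp add: sum.delta)
qed

lemma vsig_inj:
  assumes n: "0 < n" and "w \<in> vspace n" "w' \<in> vspace n" "vsig n w = vsig n w'"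
  shows "w = w'"
proof
  fix j
  have "vsig n w 0 j = vsig n w' 0 j" using assms by simp
  thus "w j = w' j" using assms unfolding vsig_row0[OF n] vspace_def
    by (cases "j < n") auto
qed


lemma prod_exists:
  assumes n: "0 < n"
  shows "\<exists>w. w \<in> vspace n \<and> vsig n w = mat_mult n (vsig n u) (vsig n v)"
proof (intro exI conjI)
  let ?P = "mat_pow n (gmat n)"
  define w where "w = (\<lambda>l. \<Sum>a<n. \<Sum>b<n. u a * v b * cvec n (a+b) l)"
  have "\<And>j. n \<le> j \<Longrightarrow> w j = 0"
  proof -
    fix j assume j: "n \<le> j"
    have "\<And>a b. cvec n (a+b) j = 0" unfolding cvec_def using mod_less_divisor[OF n] j
      by (metis not_less)
    thus "w j = 0" by (simp add: w_def)
  qed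
  thus "w \<in> vspace n" unfolding vspace_def by blast
  show "vsig n w = mat_mult n (vsig n u) (vsig n v)"
  proof (rule ext, rule ext)
    fix i j
    have e: "\<And>s. (\<Sum>l<n. cvec n s l * ?P l i j) = ?P s i j"
    proof -
      fix s
      have "vsig n (cvec n s) i j = ?P s i j" by (simp add: vsig_cvec[OF n])
      thus "(\<Sum>l<n. cvec n s l * ?P l i j) = ?P s i j" by (simp add: vsig_def)
    qed
    have "vsig n w i j = (\<Sum>l<n. \<Sum>a<n. \<Sum>b<n. u a * v b * (cvec n (a+b) l * ?P l i j))"
      unfolding vsig_def w_def sum_distrib_right by (simp add: mult_ac)
    also have "\<dots> = (\<Sum>a<n. \<Sum>l<n. \<Sum>b<n. u a * v b * (cvec n (a+b) l * ?P l i j))"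
      by (rule sum.swap)
    also have "\<dots> = (\<Sum>a<n. \<Sum>b<n. \<Sum>l<n. u a * v b * (cvec n (a+b) l * ?P l i j))"
      by (rule sum.cong[OF refl], rule sum.swap)
    also have "\<dots> = (\<Sum>a<n. \<Sum>b<n. u a * v b * ?P (a+b) i j)"
      by (simp add: sum_distrib_left[symmetric] e)
    also have "\<dots> = (\<Sum>a<n. \<Sum>b<n. \<Sum>m<n. u a * v b * (?P a i m * ?P b m j))"
      by (simp add: pow_add[OF n] mat_mult_def sum_distrib_left)
    also have "\<dots> = (\<Sum>a<n. \<Sum>m<n. \<Sum>b<n. u a * v b * (?P a i m * ?P b m j))"
      by (rule sum.cong[OF refl], rule sum.swap)
    also have "\<dots> = (\<Sum>m<n. \<Sum>a<n. \<Sum>b<n. u a * v b * (?P a i m * ?P b m j))"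
      by (rule sum.swap)
    also have "\<dots> = mat_mult n (vsig n u) (vsig n v) i j"
      unfolding mat_mult_def vsig_def by (simp add: sum_product mult_ac)
    finally show "vsig n w i j = mat_mult n (vsig n u) (vsig n v) i j" .
  qed
qed

lemma cmult_prop:
  assumes n: "0 < n"
  shows "cmult n u v \<in> vspace n \<and> vsig n (cmult n u v) = mat_mult n (vsig n u) (vsig n v)"
proof -
  obtain w where w: "w \<in> vspace n \<and> vsig n w = mat_mult n (vsig n u) (vsig n v)"
    using prod_exists[OF n] by blast
  have "\<exists>!w. w \<in> vspace n \<and> vsig n w = mat_mult n (vsig n u) (vsig n v)"
  proof (rule ex1I)
    show "w \<in> vspace n \<and> vsig n w = mat_mult n (vsig n u) (vsig n v)" using w .
    fix w' assume "w' \<in> vspace n \<and> vsig n w' = mat_mult n (vsig n u) (vsig n v)"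
    thus "w' = w" using vsig_inj[OF n, of w' w] w by simp
  qed
  thus ?thesis unfolding cmult_def by (rule theI')
qed

lemma cmult_unique:
  assumes n: "0 < n" and "w \<in> vspace n" "vsig n w = mat_mult n (vsig n u) (vsig n v)"
  shows "cmult n u v = w"
  using cmult_prop[OF n, of u v] vsig_inj[OF n, of "cmult n u v" w] assms by simp

lemma cmult_formula:
  assumes n: "0 < n"
  shows "cmult n u v j = (\<Sum>a<n. \<Sum>b<n. mat_pow n (gmat n) b a j * u a * v b)"
proof (cases "j < n")
  case True
  have "cmult n u v j = vsig n (cmult n u v) 0 j" using True by (simp add: vsig_row0[OF n])
  also have "\<dots> = (\<Sum>a<n. vsig n u 0 a * vsig n v a j)"
    using cmult_prop[OF n] by (simp add: mat_mult_def)
  also have "\<dots> = (\<Sum>a<n. u a * vsig n v a j)"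
    by (rule sum.cong) (simp_all add: vsig_row0[OF n])
  also have "\<dots> = (\<Sum>a<n. \<Sum>b<n. mat_pow n (gmat n) b a j * u a * v b)"
    unfolding vsig_def by (simp add: sum_distrib_left mult_ac)
  finally show ?thesis .
next
  case False
  hence "cmult n u v j = 0" using cmult_prop[OF n, of u v] by (simp add: vspace_def)
  moreover have "\<And>a b. mat_pow n (gmat n) b a j = 0" using False by (simp add: gpow[OF n])
  ultimately show ?thesis by simp
qed

lemma cmult_vspace: "0 < n \<Longrightarrow> cmult n u v \<in> vspace n"
  using cmult_prop by blast

lemma cmult_comm:
  assumes n: "0 < n"
  shows "cmult n u v = cmult n v u"
proof
  fix j
  have "cmult n u v j = (\<Sum>a<n. \<Sum>b<n. mat_pow n (gmat n) b a j * u a * v b)" by (rule cmult_formula[OF n])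
  also have "\<dots> = (\<Sum>b<n. \<Sum>a<n. mat_pow n (gmat n) b a j * u a * v b)" by (rule sum.swap)
  also have "\<dots> = (\<Sum>b<n. \<Sum>a<n. mat_pow n (gmat n) a b j * v b * u a)"
    by (intro sum.cong refl) (simp add: gpow[OF n] add.commute)
  also have "\<dots> = cmult n v u j" by (rule cmult_formula[OF n, symmetric])
  finally show "cmult n u v j = cmult n v u j" .
qed

lemma cmult_assoc:
  assumes n: "0 < n"
  shows "cmult n (cmult n u v) w = cmult n u (cmult n v w)"
proof (rule cmult_unique[OF n])
  show "cmult n u (cmult n v w) \<in> vspace n" by (rule cmult_vspace[OF n])
  show "vsig n (cmult n u (cmult n v w)) = mat_mult n (vsig n (cmult n u v)) (vsig n w)"
    using cmult_prop[OF n] by (simp add: mat_mult_assoc)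
qed

lemma cmult_lc: "0 < n \<Longrightarrow> cmult n x (cmult n y z) = cmult n y (cmult n x z)"
proof -
  assume n: "0 < n"
  have "cmult n x (cmult n y z) = cmult n (cmult n x y) z" by (simp add: cmult_assoc[OF n])
  also have "\<dots> = cmult n (cmult n y x) z" by (simp add: cmult_comm[OF n, of x y])
  also have "\<dots> = cmult n y (cmult n x z)" by (simp add: cmult_assoc[OF n])
  finally show ?thesis .
qed

definition scl :: "real \<Rightarrow> (nat \<Rightarrow> real) \<Rightarrow> nat \<Rightarrow> real" where
  "scl c v = (\<lambda>j. c * v j)"

lemma cmult_scl_left: "0 < n \<Longrightarrow> cmult n (scl c u) v = scl c (cmult n u v)"
  by (rule ext) (simp add: cmult_formula scl_def sum_distrib_left mult_ac)

lemma cmult_scl_right: "0 < n \<Longrightarrow> cmult n u (scl c v) = scl c (cmult n u v)"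
  by (rule ext) (simp add: cmult_formula scl_def sum_distrib_left mult_ac)

lemma cmult_sum_left: "0 < n \<Longrightarrow> cmult n (\<lambda>l. \<Sum>i\<in>I. f i l) v j = (\<Sum>i\<in>I. cmult n (f i) v j)"
proof -
  assume n: "0 < n"
  have "cmult n (\<lambda>l. \<Sum>i\<in>I. f i l) v j = (\<Sum>a<n. \<Sum>b<n. \<Sum>i\<in>I. mat_pow n (gmat n) b a j * f i a * v b)"
    by (simp add: cmult_formula[OF n] sum_distrib_left sum_distrib_right mult_ac)
  also have "\<dots> = (\<Sum>a<n. \<Sum>i\<in>I. \<Sum>b<n. mat_pow n (gmat n) b a j * f i a * v b)"
    by (intro sum.cong refl) (rule sum.swap)
  also have "\<dots> = (\<Sum>i\<in>I. \<Sum>a<n. \<Sum>b<n. mat_pow n (gmat n) b a j * f i a * v b)"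
    by (rule sum.swap)
  also have "\<dots> = (\<Sum>i\<in>I. cmult n (f i) v j)" by (simp add: cmult_formula[OF n])
  finally show ?thesis .
qed

lemma cmult_zero_left: "0 < n \<Longrightarrow> cmult n (\<lambda>_. 0) v = (\<lambda>_. 0)"
  by (rule ext) (simp add: cmult_formula)



definition unitv :: "nat \<Rightarrow> nat \<Rightarrow> real" where
  "unitv i = (\<lambda>l. if l = i then 1 else 0)"

lemma split2k: fixes k :: nat shows "(\<Sum>i<k+k. f i) = (\<Sum>i<k. f i) + (\<Sum>i<k. f (k + i)::real)"
proof -
  have u: "{..<k+k} = {..<k} \<union> {k..<k+k}" by auto
  have "sum f ({..<k} \<union> {k..<k+k}) = (\<Sum>i<k. f i) + (\<Sum>i\<in>{k..<k+k}. f i)"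
    by (rule sum.union_disjoint) auto
  hence "(\<Sum>i<k+k. f i) = (\<Sum>i<k. f i) + (\<Sum>i\<in>{k..<k+k}. f i)"
    by (simp only: u)
  also have "(\<Sum>i\<in>{k..<k+k}. f i) = (\<Sum>i<k. f (k + i))"
    using sum.shift_bounds_nat_ivl[of f 0 k k] by (simp add: lessThan_atLeast0 add.commute)
  finally show ?thesis .
qed

lemma cmult_unitv:
  assumes n: "0 < n" and i: "i < n"
  shows "cmult n (unitv i) (unitv i) l = mat_pow n (gmat n) i i l"
proof -
  have "cmult n (unitv i) (unitv i) l = (\<Sum>a<n. \<Sum>b<n. if b = i then (if a = i then mat_pow n (gmat n) b a l else 0) else 0)"
    unfolding cmult_formula[OF n] by (intro sum.cong refl) (simp add: unitv_def)
  also have "\<dots> = (\<Sum>a<n. if a = i then mat_pow n (gmat n) i a l else 0)"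
    using i by (intro sum.cong refl) simp
  also have "\<dots> = mat_pow n (gmat n) i i l" using i by simp
  finally show ?thesis .
qed

lemma sum_unit_sq:
  assumes k: "0 < k"
  shows "(\<lambda>l. \<Sum>i<2*k. cmult (2*k) (unitv i) (unitv i) l) = (\<lambda>_. 0)"
proof
  fix l
  let ?n = "2*k"
  have n: "0 < ?n" using k by simp
  define f where "f i = (if l < ?n \<and> (i + i) mod ?n = l then (-1::real) ^ ((i + i) div ?n) else 0)" for i
  have "(\<Sum>i<2*k. cmult (2*k) (unitv i) (unitv i) l) = (\<Sum>i<k+k. f i)"
    by (intro sum.cong) (auto simp: cmult_unitv[OF n] gpow[OF n] f_def)
  also have "\<dots> = (\<Sum>i<k. f i) + (\<Sum>i<k. f (k + i))" by (rule split2k)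
  also have "(\<Sum>i<k. f (k + i)) = (\<Sum>i<k. - f i)"
  proof (intro sum.cong refl)
    fix i
    have e: "k + i + (k + i) = (i + i) + 1 * ?n" by simp
    have "(k + i + (k + i)) mod ?n = (i + i) mod ?n" unfolding e by (rule mod_mult_self1)
    moreover have "(k + i + (k + i)) div ?n = 1 + (i + i) div ?n" unfolding e by (rule div_mult_self1) (use n in simp)
    ultimately show "f (k + i) = - f i" unfolding f_def by simp
  qed
  finally show "(\<Sum>i<2*k. cmult (2*k) (unitv i) (unitv i) l) = 0" by (simp add: sum_negf)
qed



definition vd :: "(real \<Rightarrow> nat \<Rightarrow> real) \<Rightarrow> (nat \<Rightarrow> real) \<Rightarrow> real \<Rightarrow> bool" where
  "vd U D t \<longleftrightarrow> (\<forall>j. ((\<lambda>s. U s j) has_real_derivative D j) (at t))"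

lemma vd_cong: "vd U D t \<Longrightarrow> D = D' \<Longrightarrow> vd U D' t" by simp

lemma vd_const: "vd (\<lambda>s. c) (\<lambda>_. 0) t"
  unfolding vd_def by simp

lemma vd_upd: "vd (\<lambda>s. x(i := s)) (unitv i) t"
  unfolding vd_def unitv_def
proof
  fix j
  show "((\<lambda>s. (x(i := s)) j) has_real_derivative (if j = i then 1 else 0)) (at t)"
    by (cases "j = i") simp_all
qed

lemma vd_cmult:
  assumes n: "0 < n" and U: "vd U DU t" and V: "vd V DV t"
  shows "vd (\<lambda>s. cmult n (U s) (V s)) (\<lambda>j. cmult n DU (V t) j + cmult n (U t) DV j) t"
  unfolding vd_def
proof
  fix j
  let ?K = "\<lambda>b a. mat_pow n (gmat n) b a j"
  have "((\<lambda>s. \<Sum>a<n. \<Sum>b<n. ?K b a * U s a * V s b) has_real_derivative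
        (\<Sum>a<n. \<Sum>b<n. ?K b a * DU a * V t b + DV b * (?K b a * U t a))) (at t)"
    using U V unfolding vd_def
    by (intro DERIV_sum DERIV_mult DERIV_cmult) auto
  moreover have "(\<Sum>a<n. \<Sum>b<n. ?K b a * DU a * V t b + DV b * (?K b a * U t a))
      = cmult n DU (V t) j + cmult n (U t) DV j"
    by (simp add: cmult_formula[OF n] sum.distrib mult_ac)
  moreover have "(\<lambda>s. cmult n (U s) (V s) j) = (\<lambda>s. \<Sum>a<n. \<Sum>b<n. ?K b a * U s a * V s b)"
    by (simp add: cmult_formula[OF n])
  ultimately show "((\<lambda>s. cmult n (U s) (V s) j) has_real_derivative cmult n DU (V t) j + cmult n (U t) DV j) (at t)"
    by simp
qed

lemma vd_cpow:
  assumes n: "0 < n" and U: "vd U DU t"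
  shows "vd (\<lambda>s. cpow n (U s) r) (scl (real r) (cmult n DU (cpow n (U t) (r - 1)))) t"
proof (induction r)
  case 0
  show ?case unfolding vd_def scl_def by simp
next
  case (Suc r)
  have "vd (\<lambda>s. cmult n (U s) (cpow n (U s) r))
     (\<lambda>j. cmult n DU (cpow n (U t) r) j + cmult n (U t) (scl (real r) (cmult n DU (cpow n (U t) (r - 1)))) j) t"
    by (rule vd_cmult[OF n U Suc])
  moreover have "(\<lambda>j. cmult n DU (cpow n (U t) r) j + cmult n (U t) (scl (real r) (cmult n DU (cpow n (U t) (r - 1)))) j)
     = scl (real (Suc r)) (cmult n DU (cpow n (U t) (Suc r - 1)))"
  proof (cases r)
    case 0
    have z: "cmult n u (\<lambda>_. 0) = (\<lambda>_. 0)" for u by (rule ext) (simp add: cmult_formula[OF n])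
    show ?thesis using 0 by (simp add: scl_def z)
  next
    case (Suc r')
    have "cmult n (U t) (scl (real r) (cmult n DU (cpow n (U t) (r - 1))))
       = scl (real r) (cmult n DU (cpow n (U t) r))"
      using Suc by (simp add: cmult_scl_right[OF n] cmult_lc[OF n])
    thus ?thesis by (simp add: scl_def algebra_simps)
  qed
  ultimately show ?case by simp
qed

definition Qf :: "nat \<Rightarrow> nat \<Rightarrow> (nat \<Rightarrow> nat \<Rightarrow> real) \<Rightarrow> nat \<Rightarrow> (nat \<Rightarrow> real) \<Rightarrow> nat \<Rightarrow> real" where
  "Qf n m b d y j = (\<Sum>r\<le>m. cmult n (b r) (cpow n y (r - d)) j)"

lemma partial_Q:
  assumes n: "0 < n"
  shows "partial_d i (\<lambda>y. Qf n m b d y j) = (\<lambda>y. Qf n m (\<lambda>r. scl (real (r - d)) (cmult n (b r) (unitv i))) (Suc d) y j)"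
proof
  fix y
  have P: "vd (\<lambda>s. cpow n (y(i := s)) (r - d)) (scl (real (r - d)) (cmult n (unitv i) (cpow n y (r - d - 1)))) (y i)" for r
    using vd_cpow[OF n vd_upd[of y i "y i"], of "r - d"] by simp
  have C: "vd (\<lambda>s. cmult n (b r) (cpow n (y(i := s)) (r - d)))
      (\<lambda>j. cmult n (\<lambda>_. 0) (cpow n y (r - d)) j + cmult n (b r) (scl (real (r - d)) (cmult n (unitv i) (cpow n y (r - d - 1)))) j) (y i)" for r
    using vd_cmult[OF n vd_const P] by simp
  have E: "cmult n (\<lambda>_. 0) (cpow n y (r - d)) j + cmult n (b r) (scl (real (r - d)) (cmult n (unitv i) (cpow n y (r - Suc d)))) j
     = cmult n (scl (real (r - d)) (cmult n (b r) (unitv i))) (cpow n y (r - Suc d)) j" for r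
    by (simp add: cmult_zero_left[OF n] cmult_scl_left[OF n] cmult_scl_right[OF n] cmult_assoc[OF n])
  have "((\<lambda>s. Qf n m b d (y(i := s)) j) has_real_derivative Qf n m (\<lambda>r. scl (real (r - d)) (cmult n (b r) (unitv i))) (Suc d) y j) (at (y i))"
    unfolding Qf_def
    by (rule DERIV_cong, rule DERIV_sum, rule C[unfolded vd_def, rule_format]) (simp add: E)
  thus "partial_d i (\<lambda>y. Qf n m b d y j) y = Qf n m (\<lambda>r. scl (real (r - d)) (cmult n (b r) (unitv i))) (Suc d) y j"
    unfolding partial_d_def by (rule DERIV_imp_deriv)
qed



lemma rpf_gen:
  fixes P :: "'p set" and \<phi> :: "'p \<Rightarrow> nat \<Rightarrow> nat"
  assumes fin: "finite P" and z: "\<forall>p\<in>P. \<forall>i\<ge>n. \<phi> p i = 0"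
    and f: "\<forall>x. f x = (\<Sum>p\<in>P. h p * (\<Prod>i<n. x i ^ \<phi> p i))"
  shows "real_poly_fun n f"
  unfolding real_poly_fun_def
proof (intro exI conjI allI)
  show "finite (\<phi> ` P)" using fin by simp
  show "\<forall>\<alpha>\<in>\<phi> ` P. \<forall>i\<ge>n. \<alpha> i = 0" using z by auto
  fix x
  have "(\<Sum>\<alpha>\<in>\<phi> ` P. (\<Sum>p\<in>{p \<in> P. \<phi> p = \<alpha>}. h p) * (\<Prod>i<n. x i ^ \<alpha> i))
      = (\<Sum>\<alpha>\<in>\<phi> ` P. \<Sum>p\<in>{p \<in> P. \<phi> p = \<alpha>}. h p * (\<Prod>i<n. x i ^ \<phi> p i))"
    by (intro sum.cong refl) (simp add: sum_distrib_right)
  also have "\<dots> = (\<Sum>p\<in>P. h p * (\<Prod>i<n. x i ^ \<phi> p i))"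
    by (rule sum.group) (use fin in auto)
  finally show "f x = (\<Sum>\<alpha>\<in>\<phi> ` P. (\<Sum>p\<in>{p \<in> P. \<phi> p = \<alpha>}. h p) * (\<Prod>i<n. x i ^ \<alpha> i))"
    using f by simp
qed

lemma rpf_const: "real_poly_fun n (\<lambda>x. c)"
  by (rule rpf_gen[where P="{()}" and \<phi>="\<lambda>_ _. 0" and h="\<lambda>_. c"]) auto

lemma rpf_var:
  assumes "i < n" shows "real_poly_fun n (\<lambda>x. x i)"
proof -
  have e: "\<forall>x::nat\<Rightarrow>real. x i = (\<Sum>p\<in>{()}. 1 * (\<Prod>l<n. x l ^ (if l = i then 1 else 0)))"
  proof
    fix x :: "nat \<Rightarrow> real"
    have "(\<Prod>l<n. x l ^ (if l = i then 1 else 0)) = (\<Prod>l<n. if l = i then x l else 1)"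
      by (rule prod.cong) auto
    thus "x i = (\<Sum>p\<in>{()}. 1 * (\<Prod>l<n. x l ^ (if l = i then 1 else 0)))" using assms by simp
  qed
  show ?thesis
    by (rule rpf_gen[where P="{()}" and \<phi>="\<lambda>_ l. if l = i then 1 else 0" and h="\<lambda>_. 1"])
       (use assms e in auto)
qed

lemma rpf_add:
  assumes "real_poly_fun n f" "real_poly_fun n g"
  shows "real_poly_fun n (\<lambda>x. f x + g x)"
proof -
  obtain S c where S: "finite S" "\<forall>\<alpha>\<in>S. \<forall>i\<ge>n. \<alpha> i = 0" "\<forall>x. f x = (\<Sum>\<alpha>\<in>S. c \<alpha> * (\<Prod>i<n. x i ^ \<alpha> i))"
    using assms(1) unfolding real_poly_fun_def by blast
  obtain T d where T: "finite T" "\<forall>\<alpha>\<in>T. \<forall>i\<ge>n. \<alpha> i = 0" "\<forall>x. g x = (\<Sum>\<alpha>\<in>T. d \<alpha> * (\<Prod>i<n. x i ^ \<alpha> i))"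
    using assms(2) unfolding real_poly_fun_def by blast
  show ?thesis
    by (rule rpf_gen[where P="S <+> T" and \<phi>="case_sum (\<lambda>\<alpha>. \<alpha>) (\<lambda>\<alpha>. \<alpha>)" and h="case_sum c d"])
       (use S T in \<open>auto simp: sum.Plus comp_def\<close>)
qed

lemma rpf_mult:
  assumes "real_poly_fun n f" "real_poly_fun n g"
  shows "real_poly_fun n (\<lambda>x. f x * g x)"
proof -
  obtain S c where S: "finite S" "\<forall>\<alpha>\<in>S. \<forall>i\<ge>n. \<alpha> i = 0" "\<forall>x. f x = (\<Sum>\<alpha>\<in>S. c \<alpha> * (\<Prod>i<n. x i ^ \<alpha> i))"
    using assms(1) unfolding real_poly_fun_def by blast
  obtain T d where T: "finite T" "\<forall>\<alpha>\<in>T. \<forall>i\<ge>n. \<alpha> i = 0" "\<forall>x. g x = (\<Sum>\<alpha>\<in>T. d \<alpha> * (\<Prod>i<n. x i ^ \<alpha> i))"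
    using assms(2) unfolding real_poly_fun_def by blast
  show ?thesis
  proof (rule rpf_gen[where P="S \<times> T" and \<phi>="\<lambda>(\<alpha>, \<beta>) i. \<alpha> i + \<beta> i" and h="\<lambda>(\<alpha>, \<beta>). c \<alpha> * d \<beta>"])
    show "finite (S \<times> T)" using S T by simp
    show "\<forall>p\<in>S \<times> T. \<forall>i\<ge>n. (case p of (\<alpha>, \<beta>) \<Rightarrow> \<lambda>i. \<alpha> i + \<beta> i) i = 0" using S T by auto
    show "\<forall>x. f x * g x = (\<Sum>p\<in>S \<times> T. (case p of (\<alpha>, \<beta>) \<Rightarrow> c \<alpha> * d \<beta>) * (\<Prod>i<n. x i ^ (case p of (\<alpha>, \<beta>) \<Rightarrow> \<lambda>i. \<alpha> i + \<beta> i) i))"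
    proof
      fix x :: "nat \<Rightarrow> real"
      have "f x * g x = (\<Sum>\<alpha>\<in>S. \<Sum>\<beta>\<in>T. (c \<alpha> * (\<Prod>i<n. x i ^ \<alpha> i)) * (d \<beta> * (\<Prod>i<n. x i ^ \<beta> i)))"
        using S T by (simp add: sum_product)
      also have "\<dots> = (\<Sum>\<alpha>\<in>S. \<Sum>\<beta>\<in>T. (c \<alpha> * d \<beta>) * (\<Prod>i<n. x i ^ (\<alpha> i + \<beta> i)))"
        by (simp add: power_add prod.distrib mult_ac)
      also have "\<dots> = (\<Sum>p\<in>S \<times> T. (case p of (\<alpha>, \<beta>) \<Rightarrow> c \<alpha> * d \<beta>) * (\<Prod>i<n. x i ^ (case p of (\<alpha>, \<beta>) \<Rightarrow> \<lambda>i. \<alpha> i + \<beta> i) i))"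
        by (simp add: sum.cartesian_product case_prod_unfold)
      finally show "f x * g x = (\<Sum>p\<in>S \<times> T. (case p of (\<alpha>, \<beta>) \<Rightarrow> c \<alpha> * d \<beta>) * (\<Prod>i<n. x i ^ (case p of (\<alpha>, \<beta>) \<Rightarrow> \<lambda>i. \<alpha> i + \<beta> i) i))" .
    qed
  qed
qed

lemma rpf_sum:
  assumes "finite I" "\<forall>i\<in>I. real_poly_fun n (f i)"
  shows "real_poly_fun n (\<lambda>x. \<Sum>i\<in>I. f i x)"
  using assms
proof (induction I rule: finite_induct)
  case empty
  then show ?case using rpf_const[of n 0] by simp
next
  case (insert a F)
  then show ?case using rpf_add[of n "f a" "\<lambda>x. \<Sum>i\<in>F. f i x"] by simp
qed

lemma rpf_cmult:
  assumes n: "0 < n" and U: "\<And>a. real_poly_fun n (\<lambda>x. U x a)" and V: "\<And>b. real_poly_fun n (\<lambda>x. V x b)"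
  shows "real_poly_fun n (\<lambda>x. cmult n (U x) (V x) j)"
  unfolding cmult_formula[OF n]
  by (intro rpf_sum ballI finite_lessThan rpf_mult rpf_const U V)

lemma rpf_cpow:
  assumes n: "0 < n"
  shows "real_poly_fun n (\<lambda>x. cpow n x r b)"
proof (induction r arbitrary: b)
  case 0
  then show ?case by (simp add: rpf_const)
next
  case (Suc r)
  have "real_poly_fun n (\<lambda>x. cmult n x (cpow n x r) b)"
    unfolding cmult_formula[OF n]
    by (intro rpf_sum ballI finite_lessThan rpf_mult rpf_const Suc rpf_var) simp
  thus ?case by simp
qed



lemma b2_sum_zero:
  assumes k: "0 < k"
  shows "(\<lambda>l. \<Sum>i<2*k. scl c (cmult (2*k) (cmult (2*k) u (unitv i)) (unitv i)) l) = (\<lambda>_. 0)"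
proof
  fix l
  let ?n = "2*k"
  have n: "0 < ?n" using k by simp
  have "(\<Sum>i<?n. scl c (cmult ?n (cmult ?n u (unitv i)) (unitv i)) l)
      = c * (\<Sum>i<?n. cmult ?n (cmult ?n (unitv i) (unitv i)) u l)"
    by (simp add: scl_def sum_distrib_left cmult_assoc[OF n] cmult_comm[OF n, of u])
  also have "(\<Sum>i<?n. cmult ?n (cmult ?n (unitv i) (unitv i)) u l)
      = cmult ?n (\<lambda>l'. \<Sum>i<?n. cmult ?n (unitv i) (unitv i) l') u l"
    by (rule cmult_sum_left[OF n, symmetric])
  also have "\<dots> = 0" by (simp add: sum_unit_sq[OF k] cmult_zero_left[OF n])
  finally show "(\<Sum>i<?n. scl c (cmult ?n (cmult ?n u (unitv i)) (unitv i)) l) = 0" by simp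
qed

theorem mainTheorem10:
  fixes k m :: nat and a :: "nat \<Rightarrow> nat \<Rightarrow> real"
  assumes "k \<ge> 1"
    and "\<forall>i\<le>m. a i \<in> vspace (2 * k)"
  shows "\<forall>j < 2 * k. harmonic_poly (2 * k) (\<lambda>x. cpoly (2 * k) a m x j)"
proof (intro allI impI)
  fix j assume j: "j < 2 * k"
  let ?n = "2 * k"
  have k: "0 < k" using assms(1) by simp
  have n: "0 < ?n" using k by simp
  have poly: "real_poly_fun ?n (\<lambda>x. cpoly ?n a m x j)"
    unfolding cpoly_def
    by (intro rpf_sum ballI finite_atMost rpf_cmult[OF n] rpf_const rpf_cpow[OF n])
  have fQ: "(\<lambda>x. cpoly ?n a m x j) = (\<lambda>y. Qf ?n m a 0 y j)"
    by (simp add: cpoly_def Qf_def)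
  define b2 where "b2 i = (\<lambda>r. scl (real (r - Suc 0)) (cmult ?n (scl (real (r - 0)) (cmult ?n (a r) (unitv i))) (unitv i)))" for i
  have pp: "partial_d i (partial_d i (\<lambda>x. cpoly ?n a m x j)) = (\<lambda>y. Qf ?n m (b2 i) 2 y j)" for i
    unfolding fQ partial_Q[OF n] b2_def by (simp add: numeral_2_eq_2)
  have lap: "laplacian ?n (\<lambda>x. cpoly ?n a m x j) x = 0" for x
  proof -
    have "laplacian ?n (\<lambda>x. cpoly ?n a m x j) x = (\<Sum>i<?n. \<Sum>r\<le>m. cmult ?n (b2 i r) (cpow ?n x (r - 2)) j)"
      by (simp add: laplacian_def pp Qf_def)
    also have "\<dots> = (\<Sum>r\<le>m. \<Sum>i<?n. cmult ?n (b2 i r) (cpow ?n x (r - 2)) j)"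
      by (rule sum.swap)
    also have "\<dots> = (\<Sum>r\<le>m. cmult ?n (\<lambda>l. \<Sum>i<?n. b2 i r l) (cpow ?n x (r - 2)) j)"
      by (simp add: cmult_sum_left[OF n])
    also have "\<dots> = 0"
    proof (intro sum.neutral ballI)
      fix r
      have "b2 i r = scl (real (r - 1) * real r) (cmult ?n (cmult ?n (a r) (unitv i)) (unitv i))" for i
        unfolding b2_def cmult_scl_left[OF n] by (simp add: scl_def mult.assoc)
      hence "(\<lambda>l. \<Sum>i<?n. b2 i r l) = (\<lambda>_. 0)" using b2_sum_zero[OF k] by simp
      thus "cmult ?n (\<lambda>l. \<Sum>i<?n. b2 i r l) (cpow ?n x (r - 2)) j = 0"
        by (simp add: cmult_zero_left[OF n])
    qed
    finally show ?thesis .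
  qed
  show "harmonic_poly ?n (\<lambda>x. cpoly ?n a m x j)"
    unfolding harmonic_poly_def using poly lap by blast
qed

end
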